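(* Let $p_t(x)=(2\pi t)^{-1/2}e^{-x^2/(2t)}$ and let $0<h\le 1$. For each integer $q\ge 2$, \[ \int\Big(\int_0^\infty \Delta^h\Delta^{-h}p_t(x)\,dt\Big)^q dx=\big(2^{q+1}/(q+1)+O(h^{1/2})\big)h^{q+1} \] and \[ \int\Big(\int_0^h \Delta^h\Delta^{-h}p_t(x)\,dt\Big)^q dx=\big(2^{q+1}/(q+1)+O(h^{1/2})\big)h^{q+1}, \] where the $O(h^{1/2})$ terms are bounded by $C_q h^{1/2}$ for a constant $C_q$ independent of $h$.
   Context: For a function $f$ on $\mathbb{R}$, $\Delta^h\Delta^{-h}f(x)=2f(x)-f(x+h)-f(x-h)$, acting in the space variable $x$. Integrals without limits are over $\mathbb{R}$. *)

theory Defs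
  imports "HOL-Analysis.Analysis"
begin

definition heat_kernel :: "real \<Rightarrow> real \<Rightarrow> real" where
  "heat_kernel t x = exp (- (x^2) / (2 * t)) / sqrt (2 * pi * t)"

text \<open>Second difference Delta^h Delta^(-h) f(x) = 2 f(x) - f(x+h) - f(x-h).\<close>
definition sym_diff2 :: "real \<Rightarrow> (real \<Rightarrow> real) \<Rightarrow> real \<Rightarrow> real" where
  "sym_diff2 h f x = 2 * f x - f (x + h) - f (x - h)"

end

theory Submission
  imports Defs "HOL-Probability.Probability" "HOL-Real_Asymp.Real_Asymp"
begin


definition EE :: "real \<Rightarrow> real" where "EE a = (LBINT s=ereal 0..ereal a. exp (- (s^2)))"

lemma EE_deriv: "(EE has_real_derivative exp (- (x^2))) (at x)"
proof -
  define r where "r = \<bar>x\<bar> + 1"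
  have c: "continuous_on {-r..r} (\<lambda>s::real. exp (- (s^2)))" by (intro continuous_intros)
  have "(EE has_vector_derivative exp (- (x^2))) (at x within {-r..r})"
    unfolding EE_def
    by (rule interval_integral_FTC2[OF _ _ c]) (auto simp: r_def)
  then have "(EE has_vector_derivative exp (- (x^2))) (at x within {-r<..<r})"
    by (rule has_vector_derivative_within_subset) auto
  then have "(EE has_vector_derivative exp (- (x^2))) (at x)"
    by (subst (asm) has_vector_derivative_within_open) (auto simp: r_def)
  then show ?thesis by (simp add: has_real_derivative_iff_has_vector_derivative)
qed

lemma EE_cont[continuous_intros]: "isCont EE x"
  using EE_deriv DERIV_isCont by blast

lemma EE_0[simp]: "EE 0 = 0" by (simp add: EE_def)

lemma EE_lim: "(EE \<longlongrightarrow> sqrt pi / 2) at_top"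
proof -
  have hb: "has_bochner_integral lborel (\<lambda>x. indicator {0..} x *\<^sub>R exp (- x\<^sup>2)) (sqrt pi / 2)"
    by (rule gaussian_moment_0)
  have si: "set_integrable lborel {0..} (\<lambda>x::real. exp (- x\<^sup>2))"
    using hb unfolding set_integrable_def by (auto simp: has_bochner_integral_iff)
  have iv: "(LBINT x:{0..}. exp (- x\<^sup>2)) = sqrt pi / 2"
    using hb unfolding set_lebesgue_integral_def by (auto simp: has_bochner_integral_iff)
  have "((\<lambda>b. LBINT x:{0..b}. exp (- x\<^sup>2)) \<longlongrightarrow> sqrt pi / 2) at_top"
    using tendsto_set_lebesgue_integral_at_top[OF _ si] iv by auto
  then show ?thesis
    apply (rule Lim_transform_eventually)
    apply (rule eventually_mono[OF eventually_ge_at_top[of 0]])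
    by (simp add: EE_def interval_integral_Icc)
qed




definition GG :: "real \<Rightarrow> real \<Rightarrow> real" where
 "GG t y = sqrt (2*t/pi) * exp (-(y^2)/(2*t)) - \<bar>y\<bar> + 2/sqrt pi * \<bar>y\<bar> * EE (\<bar>y\<bar>/sqrt (2*t))"

lemmas EE_deriv' = DERIV_chain2[OF EE_deriv]

lemma sq_aux: "a \<ge> 0 \<Longrightarrow> sqrt a * (sqrt a * x) = a * (x::real)"
  by (simp add: mult.assoc[symmetric])

lemma GG_deriv: assumes "t > 0" shows "((\<lambda>t. GG t y) has_real_derivative heat_kernel t y) (at t)"
proof -
  have s1: "exp (- ((\<bar>y\<bar>/sqrt (2*t))^2)) = exp (- (y^2/(2*t)))" using assms by (simp add: power_divide)
  have s2: "sqrt (2*t/pi) = sqrt 2 * sqrt t / sqrt pi" by (simp add: real_sqrt_divide real_sqrt_mult)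
  have s3: "sqrt (2*t) = sqrt 2 * sqrt t" by (simp add: real_sqrt_mult)
  have s4: "sqrt (2*pi*t) = sqrt 2 * sqrt pi * sqrt t" by (simp add: real_sqrt_mult)
  have st: "t = sqrt t ^ 2" using assms by simp
  have sp: "pi = sqrt pi ^ 2" by simp
  have s22: "(2::real) = sqrt 2 ^ 2" by simp
  have pos: "sqrt t > 0" "sqrt pi > 0" "sqrt 2 > 0" using assms by auto
  show ?thesis
    unfolding GG_def heat_kernel_def using assms
    apply (auto intro!: derivative_eq_intros EE_deriv' simp: )
    subgoal using pi_gt_zero by (simp add: divide_less_0_iff)
    apply (simp only: s1 s2 s3 s4)
    using pos apply (simp add: field_simps)
    using assms apply (simp add: sq_aux power2_eq_square)
    done
qed

lemma exp_diff_le: fixes u v :: real assumes "u \<le> 0" "v \<le> 0" shows "\<bar>exp u - exp v\<bar> \<le> \<bar>u - v\<bar>"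
proof -
  have *: "exp u - exp v \<le> u - v" if "v \<le> u" "u \<le> 0" for u v :: real
  proof -
    have "exp u - exp v = exp u * (1 - exp (v - u))" by (simp add: exp_diff field_simps)
    also have "\<dots> \<le> 1 * (1 - exp (v - u))"
      using that by (intro mult_right_mono) auto
    also have "\<dots> \<le> u - v" using exp_ge_add_one_self[of "v - u"] by (simp only: mult_1)
    finally show ?thesis .
  qed
  show ?thesis using *[of u v] *[of v u] assms by (cases "v \<le> u") auto
qed

lemma GG_lim0: "((\<lambda>t. GG t y) \<longlongrightarrow> 0) (at_right 0)"
proof -
  have l1: "((\<lambda>t. sqrt (2*t/pi) * exp (-(y^2)/(2*t))) \<longlongrightarrow> 0) (at_right 0)"
  proof (rule Lim_null_comparison)
    show "\<forall>\<^sub>F t in at_right 0. norm (sqrt (2*t/pi) * exp (-(y^2)/(2*t))) \<le> sqrt (2*t/pi)"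
    proof (rule eventually_mono[OF eventually_at_right_less])
      fix t :: real assume t: "0 < t"
      have "exp (-(y^2)/(2*t)) \<le> 1" using t by auto
      then show "norm (sqrt (2*t/pi) * exp (-(y^2)/(2*t))) \<le> sqrt (2*t/pi)"
        using t pi_gt_zero by (simp add: abs_mult mult_left_le less_imp_le)
    qed
    have "((\<lambda>t. sqrt (2*t/pi)) \<longlongrightarrow> sqrt (2*0/pi)) (at_right 0)"
      by (intro tendsto_intros) auto
    then show "((\<lambda>t. sqrt (2*t/pi)) \<longlongrightarrow> 0) (at_right 0)" by simp
  qed
  have l2: "((\<lambda>t. - \<bar>y\<bar> + 2/sqrt pi * \<bar>y\<bar> * EE (\<bar>y\<bar>/sqrt (2*t))) \<longlongrightarrow> 0) (at_right 0)"
  proof (cases "y = 0")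
    case True then show ?thesis by simp
  next
    case False
    define c where "c = \<bar>y\<bar>"
    have c: "c > 0" using False by (simp add: c_def)
    have "filterlim (\<lambda>t. c/sqrt (2*t)) at_top (at_right 0)"
      using c by real_asymp
    then have "((\<lambda>t. EE (c/sqrt (2*t))) \<longlongrightarrow> sqrt pi / 2) (at_right 0)"
      by (rule filterlim_compose[OF EE_lim])
    then have "((\<lambda>t. - c + 2/sqrt pi * c * EE (c/sqrt (2*t))) \<longlongrightarrow> - c + 2/sqrt pi * c * (sqrt pi / 2)) (at_right 0)"
      by (intro tendsto_intros)
    then show ?thesis by (simp add: c_def)
  qed
  show ?thesis using tendsto_add[OF l1 l2] unfolding GG_def by (simp add: algebra_simps)
qed

lemma GG_diff_inf: "((\<lambda>t. GG t a - GG t b) \<longlongrightarrow> \<bar>b\<bar> - \<bar>a\<bar>) at_top"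
proof -
  have l1: "((\<lambda>t. sqrt (2*t/pi) * (exp (-(a^2)/(2*t)) - exp (-(b^2)/(2*t)))) \<longlongrightarrow> 0) at_top"
  proof (rule Lim_null_comparison)
    show "\<forall>\<^sub>F t in at_top. norm (sqrt (2*t/pi) * (exp (-(a^2)/(2*t)) - exp (-(b^2)/(2*t)))) \<le> \<bar>a^2 - b^2\<bar> * (sqrt (2*t/pi) / (2*t))"
    proof (rule eventually_mono[OF eventually_gt_at_top[of 0]])
      fix t :: real assume t: "t > 0"
      have "\<bar>exp (-(a^2)/(2*t)) - exp (-(b^2)/(2*t))\<bar> \<le> \<bar>-(a^2)/(2*t) - -(b^2)/(2*t)\<bar>"
        using t by (intro exp_diff_le) auto
      also have "\<dots> = \<bar>a^2 - b^2\<bar> / (2*t)" using t by (simp add: field_simps abs_div)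
      finally have "\<bar>exp (-(a^2)/(2*t)) - exp (-(b^2)/(2*t))\<bar> \<le> \<bar>a^2 - b^2\<bar> / (2*t)" .
      then have "sqrt (2*t/pi) * \<bar>exp (-(a^2)/(2*t)) - exp (-(b^2)/(2*t))\<bar> \<le> sqrt (2*t/pi) * (\<bar>a^2 - b^2\<bar> / (2*t))"
        using t by (intro mult_left_mono) (auto simp: less_imp_le)
      then show "norm (sqrt (2*t/pi) * (exp (-(a^2)/(2*t)) - exp (-(b^2)/(2*t)))) \<le> \<bar>a^2 - b^2\<bar> * (sqrt (2*t/pi) / (2*t))"
        using t by (simp add: abs_mult mult.commute)
    qed
    have "((\<lambda>t. sqrt (2*t/pi) / (2*t)) \<longlongrightarrow> 0) at_top" by real_asymp
    then show "((\<lambda>t. \<bar>a^2 - b^2\<bar> * (sqrt (2*t/pi) / (2*t))) \<longlongrightarrow> 0) at_top"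
      by (rule tendsto_mult_right_zero)
  qed
  have inv: "((\<lambda>t. 1/sqrt (2*t)) \<longlongrightarrow> 0) at_top" by real_asymp
  have e: "((\<lambda>t. EE (c/sqrt (2*t))) \<longlongrightarrow> 0) at_top" for c
  proof -
    have "((\<lambda>t. c * (1/sqrt (2*t))) \<longlongrightarrow> c * 0) at_top" by (intro tendsto_intros inv)
    then have "((\<lambda>t. EE (c * (1/sqrt (2*t)))) \<longlongrightarrow> EE 0) at_top"
      by (intro isCont_tendsto_compose[OF EE_cont]) simp
    then show ?thesis by simp
  qed
  have l2: "((\<lambda>t. 2/sqrt pi * \<bar>a\<bar> * EE (\<bar>a\<bar>/sqrt (2*t)) - 2/sqrt pi * \<bar>b\<bar> * EE (\<bar>b\<bar>/sqrt (2*t))) \<longlongrightarrow> 0) at_top"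
    using tendsto_diff[OF tendsto_mult_right_zero[OF e[of "\<bar>a\<bar>"], of "2/sqrt pi * \<bar>a\<bar>"]
                          tendsto_mult_right_zero[OF e[of "\<bar>b\<bar>"], of "2/sqrt pi * \<bar>b\<bar>"]] by simp
  have "((\<lambda>t. sqrt (2*t/pi) * (exp (-(a^2)/(2*t)) - exp (-(b^2)/(2*t))) + (\<bar>b\<bar> - \<bar>a\<bar>) +
     (2/sqrt pi * \<bar>a\<bar> * EE (\<bar>a\<bar>/sqrt (2*t)) - 2/sqrt pi * \<bar>b\<bar> * EE (\<bar>b\<bar>/sqrt (2*t)))) \<longlongrightarrow> 0 + (\<bar>b\<bar> - \<bar>a\<bar>) + 0) at_top"
    by (intro tendsto_add l1 l2 tendsto_const)
  then show ?thesis unfolding GG_def by (simp add: algebra_simps)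
qed




lemma hk_cont: "t > 0 \<Longrightarrow> isCont (\<lambda>t. heat_kernel t y) t"
  unfolding heat_kernel_def by (intro continuous_intros) auto

lemma hk_nonneg: "t > 0 \<Longrightarrow> heat_kernel t y \<ge> 0"
  unfolding heat_kernel_def by auto

lemma GG_cont: "t > 0 \<Longrightarrow> isCont (\<lambda>t. GG t y) t"
  using GG_deriv DERIV_isCont by blast

lemma FTC_fin_aux:
  assumes b: "b > 0"
  shows "set_integrable lborel {0<..<b} (\<lambda>t. heat_kernel t y)"
    "(LBINT t=ereal 0..ereal b. heat_kernel t y) = GG b y - 0"
proof -
  have A: "(((\<lambda>t. GG t y) \<circ> real_of_ereal) \<longlongrightarrow> 0) (at_right (ereal 0))"
    unfolding ereal_tendsto_simps using GG_lim0 .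
  have "((\<lambda>t. GG t y) \<longlongrightarrow> GG b y) (at_left b)"
    using GG_cont[OF b] by (simp add: isCont_def filterlim_at_split)
  then have B: "(((\<lambda>t. GG t y) \<circ> real_of_ereal) \<longlongrightarrow> GG b y) (at_left (ereal b))"
    unfolding ereal_tendsto_simps .
  note r = interval_integral_FTC_nonneg[of "ereal 0" "ereal b" "\<lambda>t. GG t y" "\<lambda>t. heat_kernel t y", OF _ _ _ _ A B]
  show "set_integrable lborel {0<..<b} (\<lambda>t. heat_kernel t y)"
    using r(1) b by (auto intro!: GG_deriv hk_cont hk_nonneg)
  show "(LBINT t=ereal 0..ereal b. heat_kernel t y) = GG b y - 0"
    using r(2) b by (auto intro!: GG_deriv hk_cont hk_nonneg)
qed

lemma FTC_fin:
  assumes s: "s > 0"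
  shows "set_integrable lborel {0<..s} (\<lambda>t. heat_kernel t y)"
    "(LBINT t:{0<..s}. heat_kernel t y) = GG s y"
proof -
  show "set_integrable lborel {0<..s} (\<lambda>t. heat_kernel t y)"
  proof -
    have sub: "{0<..s} \<subseteq> {0<..<s+s}" using s by auto
    show ?thesis using set_integrable_subset[OF FTC_fin_aux(1)[of "s+s" y] _ sub] s by auto
  qed
  show "(LBINT t:{0<..s}. heat_kernel t y) = GG s y"
    using FTC_fin_aux(2)[OF s, of y] interval_integral_Ioc[of 0 s "\<lambda>t. heat_kernel t y"] s by simp
qed

lemma hk_mono: assumes "t > 0" "\<bar>a\<bar> \<le> \<bar>b\<bar>" shows "heat_kernel t b \<le> heat_kernel t a"
proof -
  have "a^2 \<le> b^2" using assms(2) by (simp add: abs_le_square_iff)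
  then have "- (b^2) / (2*t) \<le> - (a^2) / (2*t)" using assms(1) by (simp add: divide_right_mono)
  then show ?thesis unfolding heat_kernel_def using assms(1) by (intro divide_right_mono) auto
qed

lemma FTC_inf_aux:
  assumes ab: "\<bar>a\<bar> \<le> \<bar>b\<bar>"
  shows "set_integrable lborel {0<..} (\<lambda>t. heat_kernel t a - heat_kernel t b)"
    "(LBINT t:{0<..}. heat_kernel t a - heat_kernel t b) = \<bar>b\<bar> - \<bar>a\<bar>"
proof -
  have A: "(((\<lambda>t. GG t a - GG t b) \<circ> real_of_ereal) \<longlongrightarrow> 0) (at_right (ereal 0))"
    unfolding ereal_tendsto_simps using tendsto_diff[OF GG_lim0[of a] GG_lim0[of b]] by simp
  have B: "(((\<lambda>t. GG t a - GG t b) \<circ> real_of_ereal) \<longlongrightarrow> \<bar>b\<bar> - \<bar>a\<bar>) (at_left \<infinity>)"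
    unfolding ereal_tendsto_simps using GG_diff_inf .
  note r = interval_integral_FTC_nonneg[of "ereal 0" "\<infinity>" "\<lambda>t. GG t a - GG t b" "\<lambda>t. heat_kernel t a - heat_kernel t b", OF _ _ _ _ A B]
  show "set_integrable lborel {0<..} (\<lambda>t. heat_kernel t a - heat_kernel t b)"
    apply (rule r(1)[unfolded einterval_eq_Ici]) using ab by (auto intro!: derivative_eq_intros GG_deriv hk_cont hk_mono continuous_intros)
  show "(LBINT t:{0<..}. heat_kernel t a - heat_kernel t b) = \<bar>b\<bar> - \<bar>a\<bar>"
  proof -
    have "(LBINT t=ereal 0..\<infinity>. heat_kernel t a - heat_kernel t b) = \<bar>b\<bar> - \<bar>a\<bar> - 0"
      apply (rule r(2)) using ab by (auto intro!: derivative_eq_intros GG_deriv hk_cont hk_mono continuous_intros)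
    then show ?thesis by (simp add: interval_integral_to_infinity_eq)
  qed
qed

lemma FTC_inf:
  shows "set_integrable lborel {0<..} (\<lambda>t. heat_kernel t a - heat_kernel t b)"
    "(LBINT t:{0<..}. heat_kernel t a - heat_kernel t b) = \<bar>b\<bar> - \<bar>a\<bar>"
proof -
  have "set_integrable lborel {0<..} (\<lambda>t. heat_kernel t a - heat_kernel t b) \<and>
    (LBINT t:{0<..}. heat_kernel t a - heat_kernel t b) = \<bar>b\<bar> - \<bar>a\<bar>"
  proof (cases "\<bar>a\<bar> \<le> \<bar>b\<bar>")
    case True then show ?thesis using FTC_inf_aux by blast
  next
    case False
    then have ba: "\<bar>b\<bar> \<le> \<bar>a\<bar>" by simp
    have e: "(\<lambda>t. heat_kernel t a - heat_kernel t b) = (\<lambda>t. - (heat_kernel t b - heat_kernel t a))"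
      by auto
    have i: "integrable lborel (\<lambda>x. indicat_real {0<..} x * (heat_kernel x b - heat_kernel x a))"
      using FTC_inf_aux(1)[OF ba] by (simp add: set_integrable_def)
    have "integrable lborel (\<lambda>x. - (indicat_real {0<..} x * (heat_kernel x b - heat_kernel x a)))"
      using integrable_minus[OF i] .
    moreover have "(\<lambda>x. - (indicat_real {0<..} x * (heat_kernel x b - heat_kernel x a))) =
       (\<lambda>x. indicat_real {0<..} x * (- (heat_kernel x b - heat_kernel x a)))" by (rule ext) (simp only: mult_minus_right)
    ultimately have j: "set_integrable lborel {0<..} (\<lambda>t. - (heat_kernel t b - heat_kernel t a))"
      by (simp add: set_integrable_def)
    have "(LBINT t:{0<..}. heat_kernel t a - heat_kernel t b) = (LBINT t:{0<..}. - (heat_kernel t b - heat_kernel t a))"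
      by simp
    also have "\<dots> = - (LBINT t:{0<..}. heat_kernel t b - heat_kernel t a)"
      by (rule set_integral_uminus[OF FTC_inf_aux(1)[OF ba]])
    finally show ?thesis using j FTC_inf_aux[OF ba] unfolding e by simp
  qed
  then show "set_integrable lborel {0<..} (\<lambda>t. heat_kernel t a - heat_kernel t b)"
    "(LBINT t:{0<..}. heat_kernel t a - heat_kernel t b) = \<bar>b\<bar> - \<bar>a\<bar>" by auto
qed




definition TT :: "real \<Rightarrow> real \<Rightarrow> real" where "TT h x = \<bar>x+h\<bar> + \<bar>x-h\<bar> - 2*\<bar>x\<bar>"

lemma sd_split: "sym_diff2 h (\<lambda>y. heat_kernel t y) x =
   (heat_kernel t x - heat_kernel t (x+h)) + (heat_kernel t x - heat_kernel t (x-h))"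
  unfolding sym_diff2_def by simp

lemma inner_inf: "(LBINT t:{0<..}. sym_diff2 h (\<lambda>y. heat_kernel t y) x) = TT h x"
proof -
  have "(LBINT t:{0<..}. sym_diff2 h (\<lambda>y. heat_kernel t y) x) =
     (LBINT t:{0<..}. (heat_kernel t x - heat_kernel t (x+h)) + (heat_kernel t x - heat_kernel t (x-h)))"
    by (simp only: sd_split)
  also have "\<dots> = (\<bar>x+h\<bar> - \<bar>x\<bar>) + (\<bar>x-h\<bar> - \<bar>x\<bar>)"
    unfolding set_integral_add(2)[OF FTC_inf(1)[of x "x+h"] FTC_inf(1)[of x "x-h"]] FTC_inf(2) ..
  finally show ?thesis by (simp add: TT_def)
qed

lemma inner_fin: assumes h: "h > 0"
  shows "(LBINT t:{0<..h}. sym_diff2 h (\<lambda>y. heat_kernel t y) x) = 2 * GG h x - GG h (x+h) - GG h (x-h)"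
proof -
  note i = FTC_fin[OF h]
  have "(LBINT t:{0<..h}. sym_diff2 h (\<lambda>y. heat_kernel t y) x) =
     (LBINT t:{0<..h}. (heat_kernel t x - heat_kernel t (x+h)) + (heat_kernel t x - heat_kernel t (x-h)))"
    by (simp only: sd_split)
  also have "\<dots> = (GG h x - GG h (x+h)) + (GG h x - GG h (x-h))"
    unfolding set_integral_add(2)[OF set_integral_diff(1)[OF i(1) i(1)] set_integral_diff(1)[OF i(1) i(1)]]
      set_integral_diff(2)[OF i(1) i(1)] i(2) ..
  finally show ?thesis by simp
qed

lemma TT_pos: "0 \<le> x \<Longrightarrow> x \<le> h \<Longrightarrow> TT h x = 2*(h - x)"
  unfolding TT_def by auto
lemma TT_neg: "-h \<le> x \<Longrightarrow> x \<le> 0 \<Longrightarrow> TT h x = 2*(h + x)"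
  unfolding TT_def by auto
lemma TT_out: "h > 0 \<Longrightarrow> \<bar>x\<bar> \<ge> h \<Longrightarrow> TT h x = 0"
  unfolding TT_def by auto
lemma TT_nonneg: "h > 0 \<Longrightarrow> TT h x \<ge> 0"
  unfolding TT_def by auto
lemma TT_le: "h > 0 \<Longrightarrow> TT h x \<le> 2*h"
  unfolding TT_def by auto
lemma TT_cont: "continuous_on A (TT h)"
  unfolding TT_def by (intro continuous_intros)

lemma deriv_pow_lin: "c \<noteq> 0 \<Longrightarrow> ((\<lambda>x. (a*x+b)^n / c) has_real_derivative real n * (a*x+b)^(n-1) * a / c) (at (x::real))"
  by (auto intro!: derivative_eq_intros)

lemma aux_cancel: "real (q+1) * (z::real)^(q+1-1) * a / (a*(real q+1)) = z^q" if "a \<noteq> 0"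
proof -
  have ne: "(real q + 1) * a \<noteq> 0" using that by simp
  have e1: "q+1-1 = q" "real (q+1) = real q + 1" by auto
  have "real (q+1) * (z::real)^(q+1-1) * a / (a*(real q+1)) = ((real q + 1) * a) * z^q / ((real q + 1) * a)"
    by (simp only: e1 mult_ac)
  also have "\<dots> = z^q" using ne by simp
  finally show ?thesis .
qed

lemma half_sum: "(X::real) / (2*r) + X / (2*r) = X / r"
  by (simp add: field_simps)

lemma TT_int:
  assumes h: "h > 0" and q: "q \<ge> 1"
  shows "integrable lborel (\<lambda>x. TT h x ^ q)"
    "(LBINT x. TT h x ^ q) = 2^(q+1) / real (q+1) * h^(q+1)"
proof -
  obtain k where k: "q = Suc k" using q by (cases q) auto
  have e: "(\<lambda>x. TT h x ^ q) = (\<lambda>x. indicator {-h..h} x *\<^sub>R (TT h x ^ q))"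
  proof
    fix x show "TT h x ^ q = indicator {-h..h} x *\<^sub>R (TT h x ^ q)"
    proof (cases "x \<in> {-h..h}")
      case True then show ?thesis by simp
    next
      case False then have "\<bar>x\<bar> \<ge> h" by auto
      then have "TT h x = 0" using TT_out h by blast
      then show ?thesis using q False by simp
    qed
  qed
  have c: "continuous_on A (\<lambda>x. TT h x ^ q)" for A
    by (intro continuous_intros TT_cont)
  have si: "set_integrable lborel {-h..h} (\<lambda>x. TT h x ^ q)"
    by (rule borel_integrable_atLeastAtMost'[OF c])
  then show "integrable lborel (\<lambda>x. TT h x ^ q)"
    by (subst e) (simp add: set_integrable_def)
  have I1: "(LBINT x=ereal 0..ereal h. TT h x ^ q) = (2*h)^(q+1) / (2*(real q+1))"
  proof -
    have "(LBINT x=ereal 0..ereal h. TT h x ^ q) =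
       (\<lambda>x. -((2*(h-x))^(q+1)) / (2*(real q+1))) h - (\<lambda>x. -((2*(h-x))^(q+1)) / (2*(real q+1))) 0"
    proof (rule interval_integral_FTC_finite[OF c])
      fix x assume x: "min 0 h \<le> x" "x \<le> max 0 h"
      have "((\<lambda>x. ((-2)*x+2*h)^(q+1) / ((-2)*(real q+1))) has_real_derivative TT h x ^ q) (at x)"
        apply (rule DERIV_cong[OF deriv_pow_lin[of "(-2)*(real q+1)" "-2" "2*h" "q+1" x]])
        using x h aux_cancel[of "-2" q "-2*x+2*h"] by (auto simp: TT_pos algebra_simps)
      moreover have "(\<lambda>x. ((-2)*x+2*h)^(q+1) / ((-2)*(real q+1))) = (\<lambda>x. -((2*(h-x))^(q+1)) / (2*(real q+1)))"
      proof (rule ext)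
        fix y :: real
        have "(-2)*y+2*h = 2*(h-y)" by simp
        then show "((-2)*y+2*h)^(q+1) / ((-2)*(real q+1)) = -((2*(h-y))^(q+1)) / (2*(real q+1))"
          by (simp only: divide_minus_right minus_divide_left mult_minus_left)
      qed
      ultimately have "((\<lambda>x. -((2*(h-x))^(q+1)) / (2*(real q+1))) has_real_derivative TT h x ^ q) (at x)" by simp
      then show "((\<lambda>x. -((2*(h-x))^(q+1)) / (2*(real q+1))) has_vector_derivative TT h x ^ q)
          (at x within {min 0 h..max 0 h})"
        by (simp add: has_real_derivative_iff_has_vector_derivative has_vector_derivative_at_within)
    qed
    then show ?thesis by simp
  qed
  have I2: "(LBINT x=ereal (-h)..ereal 0. TT h x ^ q) = (2*h)^(q+1) / (2*(real q+1))"
  proof -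
    have "(LBINT x=ereal (-h)..ereal 0. TT h x ^ q) =
       (\<lambda>x. (2*(h+x))^(q+1) / (2*(real q+1))) 0 - (\<lambda>x. (2*(h+x))^(q+1) / (2*(real q+1))) (-h)"
    proof (rule interval_integral_FTC_finite[OF c])
      fix x assume x: "min (-h) 0 \<le> x" "x \<le> max (-h) 0"
      have "((\<lambda>x. (2*x+2*h)^(q+1) / (2*(real q+1))) has_real_derivative TT h x ^ q) (at x)"
        apply (rule DERIV_cong[OF deriv_pow_lin[of "(2*(real q+1))" "2" "2*h" "q+1" x]])
        using x h aux_cancel[of "2" q "2*x+2*h"] by (auto simp: TT_neg algebra_simps)
      moreover have "(\<lambda>x. (2*x+2*h)^(q+1) / (2*(real q+1))) = (\<lambda>x. (2*(h+x))^(q+1) / (2*(real q+1)))"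
      proof (rule ext)
        fix y :: real
        have "2*y+2*h = 2*(h+y)" by simp
        then show "(2*y+2*h)^(q+1) / (2*(real q+1)) = (2*(h+y))^(q+1) / (2*(real q+1))"
          by (simp only:)
      qed
      ultimately have "((\<lambda>x. (2*(h+x))^(q+1) / (2*(real q+1))) has_real_derivative TT h x ^ q) (at x)" by simp
      then show "((\<lambda>x. (2*(h+x))^(q+1) / (2*(real q+1))) has_vector_derivative TT h x ^ q)
          (at x within {min (-h) 0..max (-h) 0})"
        by (simp add: has_real_derivative_iff_has_vector_derivative has_vector_derivative_at_within)
    qed
    then show ?thesis using q by simp
  qed
  have ii: "interval_lebesgue_integrable lborel a b (\<lambda>x. TT h x ^ q)" if "a \<le> b" for a b :: real
    by (rule interval_integrable_continuous_on) (auto intro: c that)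
  have "(LBINT x. TT h x ^ q) = (LBINT x:{-h..h}. TT h x ^ q)"
    by (subst e) (simp add: set_lebesgue_integral_def)
  also have "\<dots> = (LBINT x=ereal (-h)..ereal h. TT h x ^ q)"
    using h by (simp add: interval_integral_Icc)
  also have "\<dots> = (LBINT x=ereal (-h)..ereal 0. TT h x ^ q) + (LBINT x=ereal 0..ereal h. TT h x ^ q)"
    using h by (intro interval_integral_sum[symmetric]) (auto intro!: ii)
  also have "\<dots> = 2^(q+1) / real (q+1) * h^(q+1)"
    unfolding I1 I2 half_sum power_mult_distrib by simp
  finally show "(LBINT x. TT h x ^ q) = 2^(q+1) / real (q+1) * h^(q+1)" .
qed




lemma EE_odd: "EE (-a) = - EE a"
proof -
  have "\<forall>x. ((\<lambda>a. EE (-a) + EE a) has_real_derivative 0) (at x)"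
  proof
    fix x :: real
    have "((\<lambda>a. EE (-a) + EE a) has_real_derivative (exp (- ((-x)^2)) * (-1) + exp (- (x^2)))) (at x)"
      by (auto intro!: derivative_eq_intros EE_deriv')
    then show "((\<lambda>a. EE (-a) + EE a) has_real_derivative 0) (at x)" by simp
  qed
  from DERIV_isconst_all[OF this, of a 0] show ?thesis by simp
qed

definition UU :: "real \<Rightarrow> real \<Rightarrow> real" where
  "UU h y = sqrt (2*h/pi) * exp (-(y^2)/(2*h)) + 2/sqrt pi * y * EE (y/sqrt (2*h))"
definition U1 :: "real \<Rightarrow> real \<Rightarrow> real" where
  "U1 h y = 2/sqrt pi * EE (y/sqrt (2*h))"
definition U2 :: "real \<Rightarrow> real \<Rightarrow> real" where
  "U2 h y = 2/sqrt pi * exp (-(y^2)/(2*h)) / sqrt (2*h)"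

lemma UU_GG: "UU h y = \<bar>y\<bar> + GG h y"
proof -
  have "\<bar>y\<bar> * EE (\<bar>y\<bar>/sqrt (2*h)) = y * EE (y/sqrt (2*h))"
    by (cases "y \<ge> 0") (auto simp: EE_odd)
  then show ?thesis unfolding UU_def GG_def by (simp add: algebra_simps)
qed

lemma U1_deriv: assumes h: "h > 0" shows "(U1 h has_real_derivative U2 h y) (at y)"
proof -
  have e: "(y / sqrt (2*h))^2 = y^2/(2*h)" using h by (simp add: power_divide)
  show ?thesis unfolding U1_def U2_def
    using h apply (auto intro!: derivative_eq_intros EE_deriv')
    using h e apply simp
    using h apply (simp add: field_simps)
    done
qed

lemma UU_deriv: assumes h: "h > 0" shows "(UU h has_real_derivative U1 h y) (at y)"
proof -
  have e: "(y / sqrt (2*h))^2 = y^2/(2*h)" using h by (simp add: power_divide)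
  have s2: "sqrt (2*h/pi) = sqrt 2 * sqrt h / sqrt pi" by (simp add: real_sqrt_divide real_sqrt_mult)
  have s3: "sqrt (2*h) = sqrt 2 * sqrt h" by (simp add: real_sqrt_mult)
  have pos: "sqrt h > 0" "sqrt pi > 0" "sqrt 2 > 0" using h by auto
  show ?thesis unfolding UU_def U1_def
    using h apply (auto intro!: derivative_eq_intros EE_deriv')
    using h apply (simp only: e s2 s3)
    using pos apply (simp add: field_simps)
    using h apply (simp add: sq_aux power2_eq_square)
    done
qed

lemma second_diff:
  fixes f f1 f2 :: "real \<Rightarrow> real"
  assumes d1: "\<And>y. (f has_real_derivative f1 y) (at y)"
    and d2: "\<And>y. (f1 has_real_derivative f2 y) (at y)" and h: "h > 0"
  shows "\<exists>\<eta> d. \<bar>\<eta> - x\<bar> < h \<and> 0 < d \<and> d < 2*h \<and> f (x+h) + f (x-h) - 2 * f x = h * d * f2 \<eta>"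
proof -
  obtain z1 where z1: "x < z1" "z1 < x+h" "f (x+h) - f x = (x+h-x) * f1 z1"
    using MVT2[of x "x+h" f f1] d1 h by auto
  obtain z2 where z2: "x-h < z2" "z2 < x" "f x - f (x-h) = (x-(x-h)) * f1 z2"
    using MVT2[of "x-h" x f f1] d1 h by auto
  obtain e where e: "z2 < e" "e < z1" "f1 z1 - f1 z2 = (z1 - z2) * f2 e"
    using MVT2[of z2 z1 f1 f2] d2 z1 z2 by auto
  have "f (x+h) + f (x-h) - 2 * f x = h * f1 z1 - h * f1 z2"
    using z1(3) z2(3) by simp
  also have "\<dots> = h * (f1 z1 - f1 z2)" by (simp add: right_diff_distrib)
  also have "\<dots> = h * (z1 - z2) * f2 e" using e(3) by simp
  finally show ?thesis using z1 z2 e by (intro exI[of _ e] exI[of _ "z1 - z2"]) auto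
qed

definition gg :: "real \<Rightarrow> real \<Rightarrow> real" where
  "gg h x = UU h (x+h) + UU h (x-h) - 2 * UU h x"

lemma inner_fin_gg: "2 * GG h x - GG h (x+h) - GG h (x-h) = TT h x - gg h x"
  unfolding gg_def TT_def UU_GG by simp

lemma U2_nonneg: "h > 0 \<Longrightarrow> U2 h y \<ge> 0"
  unfolding U2_def by auto

lemma exp_shift:
  fixes x \<eta> h :: real
  assumes h: "0 < h" "h \<le> 1" and e: "\<bar>\<eta> - x\<bar> < h"
  shows "exp (-(\<eta>^2)/(2*h)) \<le> exp (1/2) * exp (-(x^2)/(4*h))"
proof -
  have a: "(x - 2*\<eta>)^2 = x^2 - 4*x*\<eta> + 4*\<eta>^2" "(x-\<eta>)^2 = x^2 - 2*x*\<eta> + \<eta>^2"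
    by (simp_all add: power2_eq_square algebra_simps)
  have "x^2 \<le> 2*\<eta>^2 + 2*(x-\<eta>)^2" using a zero_le_power2[of "x - 2*\<eta>"] by linarith
  moreover have "(x-\<eta>)^2 \<le> h^2" using e h by (simp add: abs_le_square_iff[symmetric] abs_minus_commute less_imp_le)
  moreover have "h^2 \<le> h" using h by (simp add: power2_eq_square mult_le_one)
  ultimately have "x^2 \<le> 2*\<eta>^2 + 2*h" by linarith
  then have "-(\<eta>^2)/(2*h) \<le> 1/2 + -(x^2)/(4*h)" using h by (simp add: field_simps)
  then have "exp (-(\<eta>^2)/(2*h)) \<le> exp (1/2 + -(x^2)/(4*h))" by (simp only: exp_le_cancel_iff)
  also have "\<dots> = exp (1/2) * exp (-(x^2)/(4*h))" by (rule exp_add)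
  finally show ?thesis .
qed

lemma exp_half_le: "exp (1/2::real) \<le> sqrt (2*pi)"
proof -
  have "exp (1/2::real)^2 = exp 1" by (simp add: power2_eq_square flip: exp_add)
  then have "exp (1/2::real) = sqrt (exp 1)" by (intro real_sqrt_unique[symmetric]) auto
  also have "\<dots> \<le> sqrt (2*pi)" using exp_le pi_gt3 by simp
  finally show ?thesis .
qed

lemma gg_bounds:
  assumes h: "0 < h" "h \<le> 1"
  shows "0 \<le> gg h x" "gg h x \<le> 4 * h * sqrt h * exp (-(x^2)/(4*h))"
proof -
  obtain \<eta> d where ed: "\<bar>\<eta> - x\<bar> < h" "0 < d" "d < 2*h" "UU h (x+h) + UU h (x-h) - 2 * UU h x = h * d * U2 h \<eta>"
    using second_diff[of "UU h" "U1 h" "U2 h" h x] UU_deriv U1_deriv h by blast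
  have g: "gg h x = h * d * U2 h \<eta>" using ed(4) by (simp add: gg_def)
  show "0 \<le> gg h x" unfolding g using h ed U2_nonneg[of h \<eta>] by simp
  define W where "W = exp (-(x^2)/(4*h))"
  have W: "W \<ge> 0" by (simp add: W_def)
  have "exp (-(\<eta>^2)/(2*h)) \<le> exp (1/2) * W" unfolding W_def by (rule exp_shift[OF h ed(1)])
  also have "\<dots> \<le> sqrt (2*pi) * W" using exp_half_le W by (rule mult_right_mono)
  finally have ee: "exp (-(\<eta>^2)/(2*h)) \<le> sqrt (2*pi) * W" .
  have "U2 h \<eta> \<le> 2/sqrt pi * (sqrt (2*pi) * W) / sqrt (2*h)"
    unfolding U2_def using ee h by (intro divide_right_mono mult_left_mono) auto
  also have "\<dots> = 2 * W / sqrt h"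
    using h by (simp add: real_sqrt_mult field_simps)
  finally have U2le: "U2 h \<eta> \<le> 2 * W / sqrt h" .
  have "gg h x \<le> h * (2*h) * U2 h \<eta>"
    unfolding g using h ed U2_nonneg[of h \<eta>] by (intro mult_right_mono mult_left_mono) auto
  also have "\<dots> \<le> h * (2*h) * (2 * W / sqrt h)"
    using U2le h by (intro mult_left_mono) auto
  also have "\<dots> = 4 * h * sqrt h * W"
  proof -
    have hs: "h / sqrt h = sqrt h" using h by (simp add: real_div_sqrt)
    have "h * (2*h) * (2 * W / sqrt h) = 4 * h * W * (h / sqrt h)" by simp
    also have "\<dots> = 4 * h * sqrt h * W" unfolding hs by simp
    finally show ?thesis .
  qed
  finally show "gg h x \<le> 4 * h * sqrt h * exp (-(x^2)/(4*h))" by (simp add: W_def)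
qed

lemma UU_cont: "h > 0 \<Longrightarrow> continuous_on A (UU h)"
  using UU_deriv by (meson DERIV_isCont continuous_at_imp_continuous_on)

lemma gg_cont: "h > 0 \<Longrightarrow> continuous_on A (gg h)"
  unfolding gg_def[abs_def]
  by (intro continuous_intros continuous_on_compose2[OF UU_cont[of h UNIV]]) auto




lemma gauss_int:
  assumes h: "h > 0"
  shows "integrable lborel (\<lambda>x. exp (-(x^2)/(4*h)))"
    "(LBINT x. exp (-(x^2)/(4*h))) = sqrt (4*pi*h)"
proof -
  have e: "exp (-(x^2)/(4*h)) = sqrt (4*pi*h) * normal_density 0 (sqrt (2*h)) x" for x
    using h by (simp add: normal_density_def real_sqrt_mult power_mult_distrib)
  show "integrable lborel (\<lambda>x. exp (-(x^2)/(4*h)))"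
    unfolding e using h by (intro integrable_mult_right integrable_normal_density) auto
  show "(LBINT x. exp (-(x^2)/(4*h))) = sqrt (4*pi*h)"
    unfolding e using integral_normal_density[of "sqrt (2*h)" 0] h by simp
qed

lemma pow_diff_bound:
  fixes a b c :: real
  assumes "\<bar>a\<bar> \<le> c" "\<bar>b\<bar> \<le> c" "q \<ge> 1"
  shows "\<bar>a^q - b^q\<bar> \<le> real q * c^(q-1) * \<bar>a - b\<bar>"
proof -
  have key: "\<bar>u^q - v^q\<bar> \<le> real q * c^(q-1) * \<bar>u - v\<bar>" if uv: "v < u" "\<bar>u\<bar> \<le> c" "\<bar>v\<bar> \<le> c" for u v :: real
  proof -
    obtain z where z: "v < z" "z < u" "u^q - v^q = (u - v) * (real q * z^(q-1))"
      using MVT2[of v u "\<lambda>x. x^q" "\<lambda>x. real q * x^(q-1)"] uv by (auto intro!: derivative_eq_intros)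
    have zc: "\<bar>z\<bar> \<le> c" using z uv by auto
    have "\<bar>z^(q-1)\<bar> \<le> c^(q-1)" unfolding power_abs by (rule power_mono[OF zc]) simp
    then have "\<bar>u^q - v^q\<bar> = \<bar>u - v\<bar> * (real q * \<bar>z^(q-1)\<bar>)" using z by (simp add: abs_mult)
    also have "\<dots> \<le> \<bar>u - v\<bar> * (real q * c^(q-1))"
      using \<open>\<bar>z^(q-1)\<bar> \<le> c^(q-1)\<close> by (intro mult_left_mono) auto
    finally show ?thesis by (simp add: mult_ac)
  qed
  show ?thesis
  proof (cases a b rule: linorder_cases)
    case less then show ?thesis using key[of a b] assms by (simp add: abs_minus_commute)
  next
    case equal then show ?thesis by simp
  next
    case greater then show ?thesis using key[of b a] assms by simp
  qed
qed

lemma meas_cont: "continuous_on UNIV f \<Longrightarrow> f \<in> borel_measurable lborel"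
  using borel_measurable_continuous_onI by simp

lemma part2_bound:
  fixes h :: real and q :: nat
  assumes h: "0 < h" "h \<le> 1" and q: "q \<ge> 2"
  shows "integrable lborel (\<lambda>x. (TT h x - gg h x) ^ q)"
    "\<bar>(LBINT x. (TT h x - gg h x) ^ q) - (LBINT x. TT h x ^ q)\<bar> \<le> (2*real q+4) * 4^q * sqrt h * h^(q+1)"
proof -
  define M where "M = 4 * h * sqrt h"
  define w where "w x = exp (-(x^2)/(4*h))" for x
  define \<beta> where "\<beta> x = real q * (4*h)^(q-1) * M * indicator {-h..h} x + M^q * w x" for x
  have q1: "q \<ge> 1" using q by simp
  have M0: "M \<ge> 0" using h by (simp add: M_def)
  have Mh: "M \<le> 4*h" using h by (simp add: M_def real_sqrt_le_1_iff)
  have w01: "0 \<le> w x" "w x \<le> 1" for x using h by (auto simp: w_def)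
  have gb: "0 \<le> gg h x" "gg h x \<le> M * w x" for x using gg_bounds[OF h, of x] by (auto simp: M_def w_def)
  have gM: "gg h x \<le> M" for x
  proof -
    have "M * w x \<le> M" using mult_left_le[OF w01(2) M0] by (simp add: mult.commute)
    then show ?thesis using gb(2)[of x] by linarith
  qed
  have pt: "\<bar>(TT h x - gg h x) ^ q - TT h x ^ q\<bar> \<le> \<beta> x" for x
  proof (cases "x \<in> {-h..h}")
    case True
    have a1: "\<bar>TT h x - gg h x\<bar> \<le> 4*h"
      using TT_nonneg[OF h(1), of x] TT_le[OF h(1), of x] gb(1)[of x] gM[of x] Mh h by linarith
    have a2: "\<bar>TT h x\<bar> \<le> 4*h" using TT_nonneg[OF h(1), of x] TT_le[OF h(1), of x] h by simp
    have "\<bar>(TT h x - gg h x) ^ q - TT h x ^ q\<bar> \<le> real q * (4*h)^(q-1) * \<bar>TT h x - gg h x - TT h x\<bar>"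
      by (rule pow_diff_bound[OF a1 a2 q1])
    also have "\<dots> \<le> real q * (4*h)^(q-1) * M"
    proof -
      have "\<bar>TT h x - gg h x - TT h x\<bar> \<le> M"
        using gb[of x] gM[of x] by simp
      then show ?thesis using h by (intro mult_left_mono) auto
    qed
    also have "\<dots> \<le> \<beta> x" unfolding \<beta>_def using True M0 w01[of x] by simp
    finally show ?thesis .
  next
    case False
    then have "\<bar>x\<bar> \<ge> h" by auto
    then have T0: "TT h x = 0" using TT_out h by blast
    have "\<bar>(TT h x - gg h x) ^ q - TT h x ^ q\<bar> = gg h x ^ q"
      unfolding T0 using q1 gb(1)[of x] by (simp add: power_abs power_0_left)
    also have "\<dots> \<le> (M * w x) ^ q" using gb[of x] by (intro power_mono) auto
    also have "\<dots> = M^q * w x ^ q" by (simp add: power_mult_distrib)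
    also have "\<dots> \<le> M^q * w x"
      using power_decreasing[OF q1, of "w x"] w01[of x] M0 by (simp add: mult_left_mono)
    also have "\<dots> = \<beta> x" unfolding \<beta>_def using False by simp
    finally show ?thesis .
  qed
  have wi: "integrable lborel w" unfolding w_def[abs_def] using gauss_int(1)[OF h(1)] .
  have wv: "(LBINT x. w x) = sqrt (4*pi*h)" unfolding w_def using gauss_int(2)[OF h(1)] .
  have ii: "integrable lborel (\<lambda>x. indicator {-h..h} x :: real)"
    using h by (intro integrable_real_indicator) (auto simp: emeasure_lborel_Icc)
  have \<beta>i: "integrable lborel \<beta>" unfolding \<beta>_def[abs_def]
    using ii wi by (intro Bochner_Integration.integrable_add integrable_mult_right) auto
  have \<beta>v: "(LBINT x. \<beta> x) = real q * (4*h)^(q-1) * M * (2*h) + M^q * sqrt (4*pi*h)"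
    unfolding \<beta>_def using ii wi wv h by (simp add: Bochner_Integration.integral_add)
  have Ti: "integrable lborel (\<lambda>x. TT h x ^ q)" using TT_int(1)[OF h(1) q1] .
  have mT: "(\<lambda>x. TT h x ^ q) \<in> borel_measurable lborel"
    by (intro meas_cont continuous_intros TT_cont)
  have mF: "(\<lambda>x. (TT h x - gg h x) ^ q) \<in> borel_measurable lborel"
    by (intro meas_cont continuous_intros TT_cont gg_cont h(1))
  have Di: "integrable lborel (\<lambda>x. (TT h x - gg h x) ^ q - TT h x ^ q)"
  proof (rule Bochner_Integration.integrable_bound[OF \<beta>i])
    show "(\<lambda>x. (TT h x - gg h x) ^ q - TT h x ^ q) \<in> borel_measurable lborel" using mF mT by simp
    show "AE x in lborel. norm ((TT h x - gg h x) ^ q - TT h x ^ q) \<le> norm (\<beta> x)"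
    proof (intro AE_I2)
      fix x
      have "\<beta> x \<le> \<bar>\<beta> x\<bar>" by simp
      then show "norm ((TT h x - gg h x) ^ q - TT h x ^ q) \<le> norm (\<beta> x)"
        using pt[of x] by simp
    qed
  qed
  have Fi: "integrable lborel (\<lambda>x. (TT h x - gg h x) ^ q)"
  proof -
    have "integrable lborel (\<lambda>x. ((TT h x - gg h x) ^ q - TT h x ^ q) + TT h x ^ q)"
      using Di Ti by (rule Bochner_Integration.integrable_add)
    then show ?thesis by simp
  qed
  then show "integrable lborel (\<lambda>x. (TT h x - gg h x) ^ q)" .
  have "\<bar>(LBINT x. (TT h x - gg h x) ^ q) - (LBINT x. TT h x ^ q)\<bar> =
      \<bar>LBINT x. (TT h x - gg h x) ^ q - TT h x ^ q\<bar>"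
    using Fi Ti by (simp add: Bochner_Integration.integral_diff)
  also have "\<dots> \<le> (LBINT x. \<beta> x)"
    by (rule integral_abs_bound_integral[OF Di \<beta>i pt])
  also have "\<dots> \<le> (2*real q+4) * 4^q * sqrt h * h^(q+1)"
  proof -
    define s where "s = sqrt h"
    have s: "0 < s" "s \<le> 1" "h = s^2" using h by (auto simp: s_def real_sqrt_le_1_iff)
    have t1: "real q * (4*h)^(q-1) * M * (2*h) = 2 * q * 4^q * s * h^(q+1)"
    proof -
      obtain k where k: "q = Suc k" using q1 by (cases q) auto
      show ?thesis unfolding M_def k s_def by (simp add: power_mult_distrib field_simps)
    qed
    have "M^q * sqrt (4*pi*h) = 4^q * h^q * s^q * (2 * sqrt pi) * s"
      unfolding M_def s_def using h by (simp add: power_mult_distrib real_sqrt_mult)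
    also have "\<dots> \<le> 4^q * h^q * s^2 * 4 * s"
    proof -
      have "s^q \<le> s^2" using power_decreasing[OF q, of s] s by simp
      moreover have "2 * sqrt pi \<le> 4"
      proof -
        have "sqrt pi \<le> sqrt 4" using pi_less_4 by (simp only: real_sqrt_le_iff)
        then show ?thesis by simp
      qed
      ultimately show ?thesis using s by (intro mult_right_mono mult_mono mult_left_mono) auto
    qed
    also have "\<dots> = 4 * 4^q * s * h^(q+1)" using s by (simp add: power_add)
    finally have t2: "M^q * sqrt (4*pi*h) \<le> 4 * 4^q * s * h^(q+1)" .
    show ?thesis unfolding \<beta>v t1 using t2 by (simp add: s_def algebra_simps)
  qed
  finally have "\<bar>(LBINT x. (TT h x - gg h x) ^ q) - (LBINT x. TT h x ^ q)\<bar> \<le> (2*real q+4) * 4^q * sqrt h * h^(q+1)" .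
  then show "\<bar>(LBINT x. (TT h x - gg h x) ^ q) - (LBINT x. TT h x ^ q)\<bar> \<le> (2*real q+4) * 4^q * sqrt h * h^(q+1)" by simp
qed




theorem lemma2p4:
  fixes q :: nat
  assumes "q \<ge> 2"
  shows "\<exists>C::real. \<forall>h::real. 0 < h \<and> h \<le> 1 \<longrightarrow>
    \<bar>(LBINT x. (LBINT t:{0<..}. sym_diff2 h (\<lambda>y. heat_kernel t y) x) ^ q)
        - (2::real) ^ (q + 1) / real (q + 1) * h ^ (q + 1)\<bar> \<le> C * sqrt h * h ^ (q + 1)
    \<and> \<bar>(LBINT x. (LBINT t:{0<..h}. sym_diff2 h (\<lambda>y. heat_kernel t y) x) ^ q)
        - (2::real) ^ (q + 1) / real (q + 1) * h ^ (q + 1)\<bar> \<le> C * sqrt h * h ^ (q + 1)"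
proof (intro exI[of _ "(2*real q+4) * 4^q"] allI impI)
  fix h :: real
  assume hh: "0 < h \<and> h \<le> 1"
  then have h: "0 < h" "h \<le> 1" by auto
  have q1: "q \<ge> 1" using assms by simp
  have I1: "(\<lambda>x. (LBINT t:{0<..}. sym_diff2 h (\<lambda>y. heat_kernel t y) x) ^ q) = (\<lambda>x. TT h x ^ q)"
    by (simp add: inner_inf)
  have I2: "(\<lambda>x. (LBINT t:{0<..h}. sym_diff2 h (\<lambda>y. heat_kernel t y) x) ^ q) = (\<lambda>x. (TT h x - gg h x) ^ q)"
    by (simp add: inner_fin[OF h(1)] inner_fin_gg)
  have C0: "0 \<le> (2*real q+4) * 4^q * sqrt h * h ^ (q + 1)" using h by simp
  show "\<bar>(LBINT x. (LBINT t:{0<..}. sym_diff2 h (\<lambda>y. heat_kernel t y) x) ^ q)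
        - (2::real) ^ (q + 1) / real (q + 1) * h ^ (q + 1)\<bar> \<le> (2*real q+4) * 4^q * sqrt h * h ^ (q + 1)
    \<and> \<bar>(LBINT x. (LBINT t:{0<..h}. sym_diff2 h (\<lambda>y. heat_kernel t y) x) ^ q)
        - (2::real) ^ (q + 1) / real (q + 1) * h ^ (q + 1)\<bar> \<le> (2*real q+4) * 4^q * sqrt h * h ^ (q + 1)"
    unfolding I1 I2 TT_int(2)[OF h(1) q1, symmetric]
    using C0 part2_bound(2)[OF h assms] by simp
qed


end
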